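(* Let $A$ be a real constant and let $g(x)=\dfrac{Ae^{x/2}+e^{-x/2}}{Ae^{x/2}-e^{-x/2}}$ on an open interval where the denominator does not vanish (for $A=1$, $g=\coth(x/2)$; for $A=-1$, $g=\tanh(x/2)$). Then for every integer $i\ge2$, $$\frac i2\,g\,g^{(i-1)}+\sum_{k=0}^{\lfloor (i-1)/2\rfloor}\binom{i}{2k}B_{2k}\,g^{(i-2k)}=0,$$ where $g^{(j)}$ denotes the $j$-th derivative of $g$.
   Context: Bernoulli numbers are defined by $\frac{z}{e^z-1}=\sum_{m\ge0}\frac{B_m}{m!}z^m$ (so $B_0=1$, $B_2=1/6$). *)

theory Defs
  imports "HOL-Analysis.Analysis" "HOL-Computational_Algebra.Formal_Power_Series"
begin

text \<open>Bernoulli numbers via the generating function z/(e^z - 1) = sum B_m z^m / m!,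
  taken as a formal power series (fps division handles the factor z).\<close>
definition bernoulli_num :: "nat \<Rightarrow> real" where
  "bernoulli_num m = fact m * fps_nth (fps_X / (fps_exp 1 - 1)) m"

definition gA :: "real \<Rightarrow> real \<Rightarrow> real" where
  "gA A x = (A * exp (x/2) + exp (-x/2)) / (A * exp (x/2) - exp (-x/2))"

end

theory Submission
  imports Defs "HOL-Computational_Algebra.Polynomial"
begin
no_notation vec_nth (infixl \<open>$\<close> 90)
notation fps_nth (infixl \<open>$\<close> 75)


lemma deriv_eq_on_open:
  fixes f h :: "real \<Rightarrow> real"
  assumes "open S" "\<And>y. y \<in> S \<Longrightarrow> f y = h y" "y \<in> S"
  shows "(deriv ^^ n) f y = (deriv ^^ n) h y"
  using assms(3)
proof (induction n arbitrary: y)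
  case 0 then show ?case using assms(2) by simp
next
  case (Suc n)
  have ev: "eventually (\<lambda>w. (deriv ^^ n) f w = (deriv ^^ n) h w) (nhds y)"
    using Suc.IH Suc.prems assms(1) eventually_nhds by blast
  show ?case by (simp add: deriv_cong_ev[OF ev refl])
qed

lemma deriv_lin:
  fixes f :: "real \<Rightarrow> real"
  assumes "open S" "\<forall>m. \<forall>y\<in>S. (deriv ^^ m) f differentiable at y" "y \<in> S"
  shows "(deriv ^^ n) (\<lambda>w. c + k * f w) y = (if n = 0 then c + k * f y else k * (deriv ^^ n) f y)"
  using assms(3)
proof (induction n arbitrary: y)
  case 0 then show ?case by simp
next
  case (Suc n)
  have ev: "eventually (\<lambda>w. (deriv ^^ n) (\<lambda>w. c + k * f w) w
      = (if n = 0 then c + k * f w else k * (deriv ^^ n) f w)) (nhds y)"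
    using Suc.IH Suc.prems assms(1) eventually_nhds by blast
  have d: "((deriv ^^ n) f has_real_derivative deriv ((deriv ^^ n) f) y) (at y)"
    using assms(2) Suc.prems DERIV_deriv_iff_real_differentiable by blast
  show ?case
  proof (cases "n = 0")
    case True
    have "((\<lambda>w. c + k * f w) has_real_derivative k * deriv f y) (at y)"
      using d True by (auto intro!: derivative_eq_intros)
    then show ?thesis using True by (simp add: deriv_cong_ev[OF ev refl] DERIV_imp_deriv)
  next
    case False
    have "((\<lambda>w. k * (deriv ^^ n) f w) has_real_derivative k * deriv ((deriv ^^ n) f) y) (at y)"
      using d by (auto intro!: derivative_eq_intros)
    then show ?thesis using False by (simp add: deriv_cong_ev[OF ev refl] DERIV_imp_deriv)
  qed
qed

lemma Suc_choose': "Suc n choose k = (n choose k) + (if k = 0 then 0 else (n choose (k-1)))"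
  by (cases k) simp_all

lemma real_higher_deriv_mult:
  fixes f g :: "real \<Rightarrow> real"
  assumes "open S" "\<forall>m. \<forall>y\<in>S. (deriv ^^ m) f differentiable at y"
    "\<forall>m. \<forall>y\<in>S. (deriv ^^ m) g differentiable at y" and z: "z \<in> S"
  shows "(deriv ^^ n) (\<lambda>w. f w * g w) z =
           (\<Sum>i = 0..n. of_nat (n choose i) * (deriv ^^ i) f z * (deriv ^^ (n-i)) g z)"
using z
proof (induction n arbitrary: z)
  case 0 then show ?case by simp
next
  case (Suc n z)
  have *: "\<And>n. ((deriv ^^ n) f has_field_derivative deriv ((deriv ^^ n) f) z) (at z)"
          "\<And>n. ((deriv ^^ n) g has_field_derivative deriv ((deriv ^^ n) g) z) (at z)"
    using Suc.prems assms DERIV_deriv_iff_real_differentiable by blast+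
  have sumeq: "(\<Sum>i = 0..n.
               of_nat (n choose i) * (deriv ((deriv ^^ i) f) z * (deriv ^^ (n-i)) g z + deriv ((deriv ^^ (n-i)) g) z * (deriv ^^ i) f z)) =
            g z * deriv ((deriv ^^ n) f) z + (\<Sum>i = 0..n. (deriv ^^ i) f z * (of_nat (Suc n choose i) * (deriv ^^ (Suc n - i)) g z))"
    apply (simp add: Suc_choose' algebra_simps sum.distrib)
    apply (subst (4) sum_Suc_reindex)
    apply (auto simp: algebra_simps Suc_diff_le intro: sum.cong)
    done
  have "((deriv ^^ n) (\<lambda>w. f w * g w) has_field_derivative
         (\<Sum>i = 0..Suc n. (Suc n choose i) * (deriv ^^ i) f z * (deriv ^^ (Suc n - i)) g z))
        (at z)"
    apply (rule has_field_derivative_transform_within_open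
        [of "\<lambda>w. (\<Sum>i = 0..n. of_nat (n choose i) * (deriv ^^ i) f w * (deriv ^^ (n-i)) g w)" _ _ S])
       apply (simp add: algebra_simps)
       apply (rule derivative_eq_intros | simp)+
           apply (auto intro: DERIV_mult * \<open>open S\<close> Suc.prems Suc.IH [symmetric])
    by (metis (no_types, lifting) mult.commute sum.cong sumeq)
  then show ?case
    unfolding funpow.simps o_apply
    by (simp add: DERIV_imp_deriv)
qed



lemma gA_deriv:
  assumes "A * exp (y/2) - exp (-y/2) \<noteq> 0"
  shows "(gA A has_real_derivative (1 - gA A y ^ 2) / 2) (at y)"
proof -
  let ?N = "A * exp (y/2) + exp (-y/2)" and ?D = "A * exp (y/2) - exp (-y/2)"
  have e1: "((\<lambda>y. exp(y/2)) has_real_derivative exp(y/2) * (1/2)) (at y)"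
    by (rule DERIV_chain2[OF DERIV_exp]) (auto intro!: derivative_eq_intros)
  have e2: "((\<lambda>y. exp(-y/2)) has_real_derivative exp(-y/2) * (-1/2)) (at y)"
    by (rule DERIV_chain2[OF DERIV_exp]) (auto intro!: derivative_eq_intros)
  have n: "((\<lambda>y. A * exp (y/2) + exp (-y/2)) has_real_derivative ?D/2) (at y)"
    using DERIV_add[OF DERIV_cmult[OF e1, of A] e2] by (simp add: field_simps)
  have d: "((\<lambda>y. A * exp (y/2) - exp (-y/2)) has_real_derivative ?N/2) (at y)"
    using DERIV_diff[OF DERIV_cmult[OF e1, of A] e2] by (simp add: field_simps)
  have "((\<lambda>y. (A * exp (y/2) + exp (-y/2)) / (A * exp (y/2) - exp (-y/2))) has_real_derivative
        ((?D/2) * ?D - ?N * (?N/2)) / (?D * ?D)) (at y)"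
    using DERIV_divide[OF n d assms] by simp
  moreover have "((?D/2) * ?D - ?N * (?N/2)) / (?D * ?D) = (1 - gA A y ^ 2) / 2"
  proof -
    have "\<And>N D::real. D \<noteq> 0 \<Longrightarrow> ((D/2) * D - N * (N/2)) / (D * D) = (1 - (N/D) ^ 2) / 2"
      by (simp add: field_simps power2_eq_square)
    then show ?thesis using assms by (simp add: gA_def)
  qed
  ultimately show ?thesis unfolding gA_def[abs_def] by (simp only:)
qed

fun PP :: "nat \<Rightarrow> real poly" where
  "PP 0 = [:0, 1:]"
| "PP (Suc n) = pderiv (PP n) * [:1/2, 0, -1/2:]"

lemma gA_higher:
  assumes S: "\<forall>y\<in>{a<..<b}. A * exp (y/2) - exp (-y/2) \<noteq> 0"
  shows "\<forall>y\<in>{a<..<b}. (deriv ^^ n) (gA A) y = poly (PP n) (gA A y)"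
proof (induction n)
  case 0 then show ?case by simp
next
  case (Suc n)
  show ?case
  proof
    fix y assume y: "y \<in> {a<..<b}"
    have ev: "eventually (\<lambda>w. (deriv ^^ n) (gA A) w = poly (PP n) (gA A w)) (nhds y)"
      unfolding eventually_nhds by (intro exI[of _ "{a<..<b}"]) (use Suc.IH y in auto)
    have "((\<lambda>w. poly (PP n) (gA A w)) has_real_derivative
            poly (pderiv (PP n)) (gA A y) * ((1 - gA A y ^ 2) / 2)) (at y)"
      by (rule DERIV_chain2[OF poly_DERIV gA_deriv]) (use S y in blast)
    moreover have "poly (pderiv (PP n)) (gA A y) * ((1 - gA A y ^ 2) / 2) = poly (PP (Suc n)) (gA A y)"
      by (simp add: power2_eq_square field_simps)
    ultimately show "(deriv ^^ Suc n) (gA A) y = poly (PP (Suc n)) (gA A y)"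
      by (simp add: deriv_cong_ev[OF ev refl] DERIV_imp_deriv)
  qed
qed

lemma gA_smooth:
  assumes S: "\<forall>y\<in>{a<..<b}. A * exp (y/2) - exp (-y/2) \<noteq> 0"
  shows "\<forall>m. \<forall>y\<in>{a<..<b}. (deriv ^^ m) (gA A) differentiable at y"
proof (intro allI ballI)
  fix m y assume y: "y \<in> {a<..<b}"
  have "((\<lambda>w. poly (PP m) (gA A w)) has_real_derivative
            poly (pderiv (PP m)) (gA A y) * ((1 - gA A y ^ 2) / 2)) (at y)"
    by (rule DERIV_chain2[OF poly_DERIV gA_deriv]) (use S y in blast)
  then have "((deriv ^^ m) (gA A) has_real_derivative
            poly (pderiv (PP m)) (gA A y) * ((1 - gA A y ^ 2) / 2)) (at y)"
  proof (rule has_field_derivative_transform_within_open[where S="{a<..<b}"])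
    fix w assume "w \<in> {a<..<b}"
    then show "poly (PP m) (gA A w) = (deriv ^^ m) (gA A) w" using gA_higher[OF S, of m] by simp
  qed (use y in simp_all)
  then show "(deriv ^^ m) (gA A) differentiable at y"
    using real_differentiable_def by blast
qed

lemma gA_rec:
  assumes S: "\<forall>y\<in>{a<..<b}. A * exp (y/2) - exp (-y/2) \<noteq> 0" and x: "x \<in> {a<..<b}"
  shows "(deriv ^^ 1) (gA A) x = (1 - gA A x ^ 2) / 2"
    and "n \<ge> 1 \<Longrightarrow> (deriv ^^ Suc n) (gA A) x =
       -(1/2) * (\<Sum>i = 0..n. of_nat (n choose i) * (deriv ^^ i) (gA A) x * (deriv ^^ (n-i)) (gA A) x)"
proof -
  show "(deriv ^^ 1) (gA A) x = (1 - gA A x ^ 2) / 2"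
    using gA_deriv[of A x] S x by (simp add: DERIV_imp_deriv)
  assume n: "n \<ge> 1"
  have sm: "\<forall>m. \<forall>y\<in>{a<..<b}. (deriv ^^ m) (deriv (gA A)) differentiable at y"
    using gA_smooth[OF S] by (metis funpow_Suc_right o_apply)
  have e1: "(deriv ^^ Suc n) (gA A) x = (deriv ^^ n) (deriv (gA A)) x"
    by (metis funpow_Suc_right o_apply)
  have e2: "(deriv ^^ n) (\<lambda>w. gA A w * gA A w) x = (deriv ^^ n) (\<lambda>w. 1 + (-2) * deriv (gA A) w) x"
  proof (rule deriv_eq_on_open[where S="{a<..<b}"])
    fix y assume y: "y \<in> {a<..<b}"
    have "deriv (gA A) y = (1 - gA A y ^ 2) / 2"
      using y S gA_deriv DERIV_imp_deriv by blast
    then show "gA A y * gA A y = 1 + (-2) * deriv (gA A) y" by (simp add: power2_eq_square)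
  qed (use x in auto)
  have e3: "(deriv ^^ n) (\<lambda>w. 1 + (-2) * deriv (gA A) w) x = -2 * (deriv ^^ n) (deriv (gA A)) x"
    using deriv_lin[OF _ sm x, of n 1 "-2"] n by simp
  have e4: "(deriv ^^ n) (\<lambda>w. gA A w * gA A w) x =
     (\<Sum>i = 0..n. of_nat (n choose i) * (deriv ^^ i) (gA A) x * (deriv ^^ (n-i)) (gA A) x)"
    by (rule real_higher_deriv_mult[OF _ gA_smooth[OF S] gA_smooth[OF S] x]) simp
  show "(deriv ^^ Suc n) (gA A) x =
       -(1/2) * (\<Sum>i = 0..n. of_nat (n choose i) * (deriv ^^ i) (gA A) x * (deriv ^^ (n-i)) (gA A) x)"
    using e1 e2 e3 e4 by simp
qed



abbreviation "eX \<equiv> (fps_exp 1 :: real fps)"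
abbreviation "hh \<equiv> fps_const (1/2 :: real)"

lemma hh2: "hh * 2 = 1"
  by (simp add: fps_numeral_fps_const fps_const_mult [symmetric] del: fps_const_mult)

lemma Exm1_nz: "eX - 1 \<noteq> 0"
proof
  assume "eX - 1 = 0"
  then have "(eX - 1) $ 1 = 0" by simp
  then show False by simp
qed

lemma Exm1_sub: "subdegree (eX - 1) = 1"
  by (rule subdegreeI) auto

definition EE :: "real fps" where "EE = fps_X / (eX - 1) + hh * fps_X"

lemma EE_eq: "EE * (eX - 1) = hh * fps_X * (eX + 1)"
proof -
  have "fps_X / (eX - 1) * (eX - 1) = fps_X"
    by (rule fps_times_divide_eq[OF Exm1_nz]) (unfold Exm1_sub, simp)
  then have "EE * (eX - 1) = fps_X + hh * fps_X * (eX - 1)"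
    by (simp add: EE_def algebra_simps)
  also have "\<dots> = hh * fps_X * (eX + 1)"
    using hh2 by algebra
  finally show ?thesis .
qed

lemma bern_EE: "m \<noteq> 1 \<Longrightarrow> bernoulli_num m = fact m * EE $ m"
  by (simp add: bernoulli_num_def EE_def)

definition fneg :: "real fps \<Rightarrow> real fps" where "fneg f = Abs_fps (\<lambda>n. (-1)^n * f $ n)"

lemma fneg_mult: "fneg (f * g) = fneg f * fneg g"
proof (rule fps_ext)
  fix n
  have "(-1::real)^n * (\<Sum>i=0..n. f$i * g$(n-i)) = (\<Sum>i=0..n. ((-1)^i * f$i) * ((-1)^(n-i) * g$(n-i)))"
    by (auto simp: sum_distrib_left intro!: sum.cong simp flip: power_add)
  then show "fneg (f * g) $ n = (fneg f * fneg g) $ n"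
    by (simp add: fneg_def fps_mult_nth)
qed

lemma fneg_add: "fneg (f + g) = fneg f + fneg g"
  by (rule fps_ext) (simp add: fneg_def algebra_simps)
lemma fneg_diff: "fneg (f - g) = fneg f - fneg g"
  by (rule fps_ext) (simp add: fneg_def algebra_simps)
lemma fneg_1: "fneg 1 = 1"
  by (rule fps_ext) (simp add: fneg_def)
lemma fneg_const: "fneg (fps_const c) = fps_const c"
  by (rule fps_ext) (simp add: fneg_def)
lemma fneg_X: "fneg fps_X = - fps_X"
  by (rule fps_ext) (simp add: fneg_def fps_X_def)
lemma fneg_exp: "fneg eX = fps_exp (-1)"
  by (rule fps_ext) (simp add: fneg_def power_minus')

lemma EE_even: "fneg EE = EE"
proof -
  let ?F = "fps_exp (-1) :: real fps"
  have FE: "?F * eX = 1"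
    using fps_exp_add_mult[of "-1" "1::real"] by simp
  have "fneg (EE * (eX - 1)) = fneg (hh * fps_X * (eX + 1))" by (simp add: EE_eq)
  then have "fneg EE * (?F - 1) = hh * (- fps_X) * (?F + 1)"
    by (simp add: fneg_mult fneg_add fneg_diff fneg_1 fneg_const fneg_X fneg_exp)
  then have "fneg EE * (?F - 1) * eX = hh * (- fps_X) * (?F + 1) * eX" by simp
  then have "fneg EE * (eX - 1) = hh * fps_X * (eX + 1)"
    using FE by algebra
  then have "fneg EE * (eX - 1) = EE * (eX - 1)" by (simp add: EE_eq)
  then show ?thesis using Exm1_nz by simp
qed

lemma EE_odd: "odd n \<Longrightarrow> EE $ n = 0"
proof -
  assume "odd n"
  have "fneg EE $ n = EE $ n" by (simp add: EE_even)
  then show "EE $ n = 0" using \<open>odd n\<close> by (simp add: fneg_def)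
qed



lemma sum_even:
  fixes f :: "nat \<Rightarrow> real"
  assumes "\<And>j. odd j \<Longrightarrow> f j = 0" "i \<ge> 1"
  shows "(\<Sum>j<i. f j) = (\<Sum>k=0..(i-1) div 2. f (2*k))"
proof -
  have inj: "inj_on (\<lambda>k::nat. 2*k) {0..(i-1) div 2}" by (auto simp: inj_on_def)
  have "(\<Sum>k=0..(i-1) div 2. f (2*k)) = sum f ((\<lambda>k. 2*k) ` {0..(i-1) div 2})"
    using sum.reindex[OF inj, of f] by (simp add: o_def)
  also have "\<dots> = (\<Sum>j<i. f j)"
  proof (rule sum.mono_neutral_left)
    show "(\<lambda>k. 2*k) ` {0..(i-1) div 2} \<subseteq> {..<i}" using assms(2) by auto
    show "\<forall>x\<in>{..<i} - (\<lambda>k. 2*k) ` {0..(i-1) div 2}. f x = 0"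
    proof
      fix x assume x: "x \<in> {..<i} - (\<lambda>k. 2*k) ` {0..(i-1) div 2}"
      show "f x = 0"
      proof (cases "odd x")
        case True then show ?thesis using assms(1) by blast
      next
        case False
        then have "x = 2 * (x div 2)" by simp
        moreover have "x div 2 \<in> {0..(i-1) div 2}" using x by auto
        ultimately have "x \<in> (\<lambda>k. 2*k) ` {0..(i-1) div 2}" by blast
        then show ?thesis using x by blast
      qed
    qed
  qed simp
  finally show ?thesis by simp
qed

lemma lin_ode:
  fixes H K :: "real fps"
  assumes "fps_deriv H = K * H" "H $ 0 = 0"
  shows "H = 0"
proof -
  have "\<forall>m\<le>n. H $ m = 0" for n
  proof (induction n)
    case 0 then show ?case using assms(2) by simp
  next
    case (Suc n)
    have "(K * H) $ n = 0"
      using Suc.IH by (simp add: fps_mult_nth)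
    then have "fps_deriv H $ n = 0" using assms(1) by simp
    then have "H $ Suc n = 0" by simp
    then show ?case using Suc.IH le_Suc_eq by blast
  qed
  then show ?thesis by (intro fps_ext) auto
qed



lemma main_fps:
  fixes c :: "nat \<Rightarrow> real" and u :: real
  assumes c0: "c 0 = u" and c1: "c 1 = (1 - u^2)/2"
    and cS: "\<And>n. n \<ge> 1 \<Longrightarrow> c (Suc n) = -(1/2) * (\<Sum>i=0..n. of_nat (n choose i) * c i * c (n-i))"
    and i: "i \<ge> 2"
  shows "real i / 2 * u * c (i-1) + (\<Sum>k=0..(i-1) div 2. real (i choose (2*k)) * bernoulli_num (2*k) * c (i-2*k)) = 0"
proof -
  define G where "G = Abs_fps (\<lambda>n. c n / fact n)"
  define U where "U = fps_const u"
  have GD: "fps_deriv G = hh * (1 - G*G)"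
  proof (rule fps_ext)
    fix n
    show "fps_deriv G $ n = (hh * (1 - G*G)) $ n"
    proof (cases "n = 0")
      case True
      then show ?thesis using c0 c1 by (simp add: G_def fps_mult_nth power2_eq_square)
    next
      case False
      have bin: "(\<Sum>i=0..n. of_nat (n choose i) * c i * c (n-i)) = fact n * (\<Sum>i=0..n. c i / fact i * (c (n-i) / fact (n-i)))"
        by (auto simp: sum_distrib_left binomial_fact intro!: sum.cong)
      have "fps_deriv G $ n = of_nat (n+1) * (c (Suc n) / (of_nat (n+1) * fact n))"
        by (simp add: G_def fact_Suc del: of_nat_Suc)
      also have "\<dots> = c (Suc n) / fact n"
        by (simp del: of_nat_Suc)
      also have "\<dots> = -(1/2) * (\<Sum>i=0..n. c i / fact i * (c (n-i) / fact (n-i)))"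
        using cS[of n] False bin by simp
      also have "\<dots> = (1/2) * ((1 - G*G) $ n)"
        using False by (simp add: G_def fps_mult_nth)
      also have "\<dots> = (hh * (1 - G*G)) $ n"
        by (simp only: fps_mult_left_const_nth)
      finally show ?thesis .
    qed
  qed
  define Dn where "Dn = (1 + U) * eX + (1 - U)"
  define Nn where "Nn = (1 + U) * eX + (U - 1)"
  define H where "H = G * Dn - Nn"
  have "fps_deriv H = hh * (1 - G*G) * Dn + G * ((1 + U) * eX) - (1 + U) * eX"
    by (simp add: H_def Dn_def Nn_def GD U_def algebra_simps)
  also have "\<dots> = (hh * (1 - G)) * H"
    unfolding H_def Dn_def Nn_def using hh2 by algebra
  finally have "H = 0"
    by (rule lin_ode) (simp add: H_def Dn_def Nn_def G_def U_def c0)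
  then have GDN: "G * Dn = Nn" by (simp add: H_def)
  have "EE * (G - U) * (eX - 1) = hh * fps_X * (1 - U * G) * (eX - 1)"
  proof -
    have "EE * (G - U) * (eX - 1) = (EE * (eX - 1)) * (G - U)" by algebra
    also have "\<dots> = hh * fps_X * (eX + 1) * (G - U)" by (simp add: EE_eq)
    also have "\<dots> = hh * fps_X * (1 - U * G) * (eX - 1)"
      using GDN unfolding Dn_def Nn_def by algebra
    finally show ?thesis .
  qed
  then have key: "EE * (G - U) = hh * fps_X * (1 - U * G)"
    using Exm1_nz by simp
  have "(EE * (G - U)) $ i = (hh * fps_X * (1 - U * G)) $ i" by (simp add: key)
  moreover have "(EE * (G - U)) $ i = (\<Sum>j=0..i. EE$j * (c (i-j) / fact (i-j))) - u * EE$i"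
  proof -
    have "EE * (G - U) = EE * G - U * EE" by algebra
    moreover have UE: "(U * EE) $ i = u * EE $ i" by (simp add: U_def)
    ultimately show ?thesis by (simp only: fps_sub_nth UE) (simp add: G_def fps_mult_nth)
  qed
  moreover have "(hh * fps_X * (1 - U * G)) $ i = -(1/2) * u * (c (i-1) / fact (i-1))"
  proof -
    have "(hh * fps_X * (1 - U * G)) $ i = (1/2) * ((fps_X * (1 - U * G)) $ i)"
      by (simp only: mult.assoc fps_mult_left_const_nth)
    then show ?thesis using i by (simp add: U_def G_def)
  qed
  moreover have "(\<Sum>j=0..i. EE$j * (c (i-j) / fact (i-j))) = (\<Sum>j<i. EE$j * (c (i-j) / fact (i-j))) + EE$i * u"
    by (simp add: atLeast0AtMost lessThan_Suc_atMost[symmetric] c0)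
  ultimately have S1: "(\<Sum>j<i. EE$j * (c (i-j) / fact (i-j))) = -(1/2) * u * (c (i-1) / fact (i-1))"
    by simp
  define f where "f j = real (i choose j) * (fact j * EE$j) * c (i-j)" for j
  have "fact i * (\<Sum>j<i. EE$j * (c (i-j) / fact (i-j))) = (\<Sum>j<i. f j)"
    unfolding sum_distrib_left
  proof (rule sum.cong[OF refl])
    fix j assume "j \<in> {..<i}"
    then have "j \<le> i" by simp
    then show "fact i * (EE$j * (c (i-j) / fact (i-j))) = f j"
      by (simp add: f_def binomial_fact field_simps)
  qed
  moreover have "fact i * (-(1/2) * u * (c (i-1) / fact (i-1))) = - (real i / 2 * u * c (i-1))"
    using i fact_reduce[of i, where 'a=real] by (simp add: field_simps)
  ultimately have S2: "(\<Sum>j<i. f j) = - (real i / 2 * u * c (i-1))"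
    using S1 by simp
  have "(\<Sum>j<i. f j) = (\<Sum>k=0..(i-1) div 2. f (2*k))"
    by (rule sum_even) (use i in \<open>auto simp: f_def EE_odd\<close>)
  also have "\<dots> = (\<Sum>k=0..(i-1) div 2. real (i choose (2*k)) * bernoulli_num (2*k) * c (i-2*k))"
  proof (rule sum.cong[OF refl])
    fix k :: nat
    have "2*k \<noteq> 1" by presburger
    then show "f (2*k) = real (i choose (2*k)) * bernoulli_num (2*k) * c (i-2*k)"
      by (simp add: f_def bern_EE)
  qed
  finally show ?thesis using S2 by simp
qed

theorem mainTheorem9:
  fixes A a b x :: real and i :: nat
  assumes "\<forall>y\<in>{a<..<b}. A * exp (y/2) - exp (-y/2) \<noteq> 0"
    and "x \<in> {a<..<b}"
    and "i \<ge> 2"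
  shows "real i / 2 * gA A x * (deriv ^^ (i - 1)) (gA A) x
         + (\<Sum>k=0..(i - 1) div 2. real (i choose (2*k)) * bernoulli_num (2*k)
              * (deriv ^^ (i - 2*k)) (gA A) x) = 0"
proof -
  have h1: "(deriv ^^ 0) (gA A) x = gA A x" by simp
  have h2: "(deriv ^^ 1) (gA A) x = (1 - gA A x ^ 2) / 2"
    by (rule gA_rec(1)[OF assms(1,2)])
  have h3: "\<And>n. n \<ge> 1 \<Longrightarrow> (deriv ^^ Suc n) (gA A) x = -(1/2) *
     (\<Sum>i=0..n. of_nat (n choose i) * (deriv ^^ i) (gA A) x * (deriv ^^ (n-i)) (gA A) x)"
    by (rule gA_rec(2)[OF assms(1,2)])
  show ?thesis
    using main_fps[of "\<lambda>n. (deriv ^^ n) (gA A) x" "gA A x", OF h1 h2 h3 assms(3)] .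
qed

end
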